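(* For every $m\ge1$, every capacity vector $\vec k$ with $k_1+\dots+k_m<n$ and every percentile vector $\vec v\in[0,1]^m$, the percentile mechanism $\mathcal{PM}_{\vec v}$ is absolutely truthful.
   Context: There are $n$ agents with positions $\vec x=(x_1,\dots,x_n)\in[0,1]^n$ and $m$ facilities with positive integer capacities $\vec k=(k_1,\dots,k_m)$, $\sum_j k_j<n$. A facility location is $\vec y=(y_1,\dots,y_m)$, $y_j$ the position of the facility of capacity $k_j$. A fixed priority order on agents breaks ties. FCFS game induced by $(\vec x,\vec y)$: each agent $i$ chooses $s_i\in\{1,\dots,m\}$; $\mathcal S_j$ is the set of agents choosing $j$; $T_j\subseteq\mathcal S_j$ consists of the $\min(k_j,|\mathcal S_j|)$ agents of $\mathcal S_j$ closest to $y_j$ (ties by priority); utility $u_i(\vec x,\vec y;\vec s)=1-|x_i-y_j|$ if $i\in T_j$, and $0$ otherwise. A mechanism is a map $M:[0,1]^n\to\mathbb R^m$. $M$ is absolutely truthful if for every agent $i$, every $\vec x\in[0,1]^n$, every $x_i'\in[0,1]$ and every $\vec s_{-i}\in\{1,\dots,m\}^{n-1}$, $\max_{s_i}u_i(\vec x,M(\vec x);s_i,\vec s_{-i})\ge \max_{s_i'}u_i(\vec x,M(x_i',\vec x_{-i});s_i',\vec s_{-i})$. The percentile mechanism $\mathcal{PM}_{\vec v}$ associated with $\vec v\in[0,1]^m$: sort the reports so that $x_1\le\dots\le x_n$ and set $y_j=x_{i_j}$ with $i_j=\lfloor (n-1)v_j\rfloor+1$ for every $j$. *)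

theory Defs
  imports Complex_Main
begin

text \<open>Agents are 0..n-1, facilities are 0..m-1. Positions x :: nat => real,
  capacities k :: nat => nat, facility location y :: nat => real,
  strategy profile s :: nat => nat (s i is the facility chosen by agent i).
  The priority order is given by an injective rank function prio on the agents:
  agent a has priority over agent b iff prio a < prio b.\<close>

definition choosers :: "nat \<Rightarrow> (nat \<Rightarrow> nat) \<Rightarrow> nat \<Rightarrow> nat set" where
  "choosers n s j = {i. i < n \<and> s i = j}"

definition beats :: "(nat \<Rightarrow> nat) \<Rightarrow> (nat \<Rightarrow> real) \<Rightarrow> real \<Rightarrow> nat \<Rightarrow> nat \<Rightarrow> bool" where
  "beats prio x p a b \<longleftrightarrow>
     \<bar>x a - p\<bar> < \<bar>x b - p\<bar> \<or> (\<bar>x a - p\<bar> = \<bar>x b - p\<bar> \<and> prio a < prio b)"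

text \<open>T_j: the min(k_j, |S_j|) agents of S_j closest to y_j, ties broken by priority.\<close>
definition served :: "nat \<Rightarrow> (nat \<Rightarrow> nat) \<Rightarrow> (nat \<Rightarrow> nat) \<Rightarrow> (nat \<Rightarrow> real)
    \<Rightarrow> (nat \<Rightarrow> real) \<Rightarrow> (nat \<Rightarrow> nat) \<Rightarrow> nat \<Rightarrow> nat set" where
  "served n k prio x y s j =
     {i \<in> choosers n s j.
        card {i' \<in> choosers n s j. beats prio x (y j) i' i} < k j}"

definition utility :: "nat \<Rightarrow> (nat \<Rightarrow> nat) \<Rightarrow> (nat \<Rightarrow> nat) \<Rightarrow> (nat \<Rightarrow> real)
    \<Rightarrow> (nat \<Rightarrow> real) \<Rightarrow> (nat \<Rightarrow> nat) \<Rightarrow> nat \<Rightarrow> real" where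
  "utility n k prio x y s i =
     (if i \<in> served n k prio x y s (s i) then 1 - \<bar>x i - y (s i)\<bar> else 0)"

definition best_utility :: "nat \<Rightarrow> nat \<Rightarrow> (nat \<Rightarrow> nat) \<Rightarrow> (nat \<Rightarrow> nat) \<Rightarrow> (nat \<Rightarrow> real)
    \<Rightarrow> (nat \<Rightarrow> real) \<Rightarrow> (nat \<Rightarrow> nat) \<Rightarrow> nat \<Rightarrow> real" where
  "best_utility n m k prio x y s i =
     Max ((\<lambda>si. utility n k prio x y (s(i := si)) i) ` {..<m})"

definition absolutely_truthful :: "nat \<Rightarrow> nat \<Rightarrow> (nat \<Rightarrow> nat) \<Rightarrow> (nat \<Rightarrow> nat)
    \<Rightarrow> ((nat \<Rightarrow> real) \<Rightarrow> (nat \<Rightarrow> real)) \<Rightarrow> bool" where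
  "absolutely_truthful n m k prio M \<longleftrightarrow>
     (\<forall>i < n. \<forall>x x' s.
        (\<forall>l < n. x l \<in> {0..1}) \<longrightarrow> x' \<in> {0..1} \<longrightarrow> (\<forall>l < n. s l < m) \<longrightarrow>
        best_utility n m k prio x (M x) s i \<ge> best_utility n m k prio x (M (x(i := x'))) s i)"

text \<open>Percentile mechanism: y_j is the (floor((n-1) v_j) + 1)-th smallest report
  (1-based), i.e. entry floor((n-1) v_j) (0-based) of the sorted report list.\<close>
definition percentile_mechanism :: "nat \<Rightarrow> (nat \<Rightarrow> real) \<Rightarrow> (nat \<Rightarrow> real) \<Rightarrow> (nat \<Rightarrow> real)" where
  "percentile_mechanism n v x =
     (\<lambda>j. sort (map x [0..<n]) ! nat \<lfloor>(real n - 1) * v j\<rfloor>)"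

end

theory Submission
  imports Defs
begin

lemma sorted_nth_P:
  assumes "sorted L" "\<And>z z'. P z \<Longrightarrow> z' \<le> z \<Longrightarrow> P z'" "r < length L"
  shows "P (L!r) \<longleftrightarrow> r < length (filter P L)"
  using assms
proof (induction L arbitrary: r)
  case Nil
  then show ?case by simp
next
  case (Cons y ys)
  show ?case
  proof (cases "P y")
    case True
    then show ?thesis using Cons by (cases r) auto
  next
    case False
    have "\<not> P z" if "z \<in> set ys" for z
      using Cons.prems(1) Cons.prems(2)[of z y] that False by auto
    hence "filter P ys = []" by (simp add: filter_empty_conv)
    moreover have "\<not> P ((y#ys)!r)"
      using False \<open>\<And>z. z \<in> set ys \<Longrightarrow> \<not> P z\<close> Cons.prems(3)
      by (cases r) auto
    ultimately show ?thesis using False by simp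
  qed
qed

lemma cnt:
  "length (filter P (sort (map (x::nat\<Rightarrow>real) [0..<n]))) = card {l. l < n \<and> P (x l)}"
proof -
  have "length (filter P (sort (map x [0..<n]))) = length (filter P (map x [0..<n]))"
    by (metis filter_sort length_sort)
  also have "\<dots> = card {l. l < n \<and> P (x l)}"
    by (simp add: length_filter_conv_card, intro arg_cong[where f=card]) auto
  finally show ?thesis .
qed

lemma ostat_le:
  assumes "r < n"
  shows "sort (map (x::nat\<Rightarrow>real) [0..<n]) ! r \<le> t \<longleftrightarrow> r < card {l. l < n \<and> x l \<le> t}"
proof -
  have "sort (map x [0..<n]) ! r \<le> t \<longleftrightarrow> r < length (filter (\<lambda>z. z \<le> t) (sort (map x [0..<n])))"
    by (rule sorted_nth_P) (use assms in auto)
  then show ?thesis by (simp add: cnt)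
qed

lemma ostat_less:
  assumes "r < n"
  shows "sort (map (x::nat\<Rightarrow>real) [0..<n]) ! r < t \<longleftrightarrow> r < card {l. l < n \<and> x l < t}"
proof -
  have "sort (map x [0..<n]) ! r < t \<longleftrightarrow> r < length (filter (\<lambda>z. z < t) (sort (map x [0..<n])))"
    by (rule sorted_nth_P) (use assms in auto)
  then show ?thesis by (simp add: cnt)
qed

lemma ostat:
  fixes x :: "nat \<Rightarrow> real" and a :: real
  assumes "i < n" "r < n"
  defines "y \<equiv> sort (map x [0..<n]) ! r"
  defines "y' \<equiv> sort (map (x(i:=a)) [0..<n]) ! r"
  shows "(x i \<le> y \<and> y \<le> y') \<or> (y' \<le> y \<and> y \<le> x i)"
proof (cases "x i \<le> a")
  case True
  have sub: "card {l. l < n \<and> (x(i:=a)) l \<le> t} \<le> card {l. l < n \<and> x l \<le> t}" for t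
    by (rule card_mono) (use True in auto)
  have yy: "y \<le> y'"
  proof (rule ccontr)
    assume "\<not> y \<le> y'"
    have "r < card {l. l < n \<and> (x(i:=a)) l \<le> y'}"
      using ostat_le[OF assms(2), of "x(i:=a)" y'] y'_def by simp
    hence "r < card {l. l < n \<and> x l \<le> y'}" using sub[of y'] by linarith
    hence "y \<le> y'" using ostat_le[OF assms(2), of x y'] y_def by simp
    thus False using \<open>\<not> y \<le> y'\<close> by simp
  qed
  show ?thesis
  proof (cases "y < x i")
    case True
    have eq: "{l. l < n \<and> (x(i:=a)) l \<le> y} = {l. l < n \<and> x l \<le> y}"
      using True \<open>x i \<le> a\<close> by auto
    have "r < card {l. l < n \<and> x l \<le> y}"
      using ostat_le[OF assms(2), of x y] y_def by simp
    hence "y' \<le> y" using ostat_le[OF assms(2), of "x(i:=a)" y] y'_def eq by simp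
    then show ?thesis using True by simp
  next
    case False
    then show ?thesis using yy by simp
  qed
next
  case False
  have sub: "card {l. l < n \<and> x l < t} \<le> card {l. l < n \<and> (x(i:=a)) l < t}" for t
    by (rule card_mono) (use False in auto)
  have yy: "y' \<le> y"
  proof (rule ccontr)
    assume "\<not> y' \<le> y"
    have "r < card {l. l < n \<and> x l < y'}"
      using ostat_less[OF assms(2), of x y'] y_def \<open>\<not> y' \<le> y\<close> by simp
    hence "r < card {l. l < n \<and> (x(i:=a)) l < y'}" using sub[of y'] by linarith
    hence "y' < y'" using ostat_less[OF assms(2), of "x(i:=a)" y'] y'_def by simp
    thus False by simp
  qed
  show ?thesis
  proof (cases "x i < y")
    case True
    have eq: "{l. l < n \<and> (x(i:=a)) l < y} = {l. l < n \<and> x l < y}"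
      using True False by auto
    have "y \<le> y'"
    proof (rule ccontr)
      assume "\<not> y \<le> y'"
      hence "r < card {l. l < n \<and> (x(i:=a)) l < y}"
        using ostat_less[OF assms(2), of "x(i:=a)" y] y'_def by simp
      hence "y < y" using ostat_less[OF assms(2), of x y] y_def eq by simp
      thus False by simp
    qed
    then show ?thesis using True by simp
  next
    case False
    then show ?thesis using yy by simp
  qed
qed

lemma beats_mono:
  assumes "(xi \<le> y \<and> y \<le> y') \<or> (y' \<le> y \<and> y \<le> xi)" "x i = xi"
    and "beats prio x y a i"
  shows "beats prio x y' a i"
proof -
  have d: "\<bar>x i - y'\<bar> = \<bar>x i - y\<bar> + \<bar>y - y'\<bar>" using assms(1,2) by auto
  have "\<bar>x a - y'\<bar> \<le> \<bar>x a - y\<bar> + \<bar>y - y'\<bar>" by linarith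
  thus ?thesis using assms(3) d unfolding beats_def by linarith
qed

lemma max_le:
  assumes "finite A" "A \<noteq> {}" "\<And>a. a \<in> A \<Longrightarrow> (f' a::real) \<le> f a"
  shows "Max (f' ` A) \<le> Max (f ` A)"
proof -
  have "Max (f' ` A) \<in> f' ` A" by (rule Max_in) (use assms in auto)
  then obtain a where a: "a \<in> A" "Max (f' ` A) = f' a" by blast
  have "f a \<le> Max (f ` A)" using assms a by auto
  moreover have "f' a \<le> f a" using assms(3) a(1) .
  ultimately show ?thesis using a(2) by linarith
qed

theorem theorem2:
  fixes n m :: nat and k :: "nat \<Rightarrow> nat" and prio :: "nat \<Rightarrow> nat" and v :: "nat \<Rightarrow> real"
  assumes "m \<ge> 1"
    and "\<forall>j < m. k j > 0"
    and "(\<Sum>j<m. k j) < n"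
    and "inj_on prio {..<n}"
    and "\<forall>j < m. v j \<in> {0..1}"
  shows "absolutely_truthful n m k prio (percentile_mechanism n v)"
  unfolding absolutely_truthful_def
proof (intro allI impI)
  fix i x x' s
  assume i: "i < n" and x: "\<forall>l<n. x l \<in> {0..1::real}" and x': "x' \<in> {0..1::real}"
    and s: "\<forall>l<n. s l < m"
  have n1: "n \<ge> 1" using i by simp
  let ?y = "percentile_mechanism n v x"
  let ?y' = "percentile_mechanism n v (x(i := x'))"
  have idx: "nat \<lfloor>(real n - 1) * v j\<rfloor> < n" if "j < m" for j
  proof -
    have "(real n - 1) * v j \<le> real n - 1"
      using assms(5) that n1 by (simp add: mult_left_le)
    hence "\<lfloor>(real n - 1) * v j\<rfloor> \<le> \<lfloor>real n - 1\<rfloor>"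
      by (rule floor_mono)
    hence "\<lfloor>(real n - 1) * v j\<rfloor> \<le> int n - 1" by simp
    thus ?thesis using n1 by linarith
  qed
  have yrel: "(x i \<le> ?y j \<and> ?y j \<le> ?y' j) \<or> (?y' j \<le> ?y j \<and> ?y j \<le> x i)" if "j < m" for j
    unfolding percentile_mechanism_def using ostat[OF i idx[OF that], of x x'] by simp
  have yin: "?y j \<in> {0..1}" if "j < m" for j
  proof -
    have "?y j \<in> set (sort (map x [0..<n]))"
      unfolding percentile_mechanism_def using idx[OF that] by (metis length_map length_sort length_upt minus_nat.diff_0 nth_mem)
    thus ?thesis using x by auto
  qed
  have "utility n k prio x ?y' (s(i := si)) i \<le> utility n k prio x ?y (s(i := si)) i"
    if si: "si < m" for si
  proof -
    let ?s = "s(i := si)"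
    let ?C = "choosers n ?s si"
    have fin: "finite ?C" unfolding choosers_def by simp
    have sub: "{i' \<in> ?C. beats prio x (?y si) i' i} \<subseteq> {i' \<in> ?C. beats prio x (?y' si) i' i}"
      using beats_mono[OF yrel[OF si], of x i prio] by auto
    have cle: "card {i' \<in> ?C. beats prio x (?y si) i' i} \<le> card {i' \<in> ?C. beats prio x (?y' si) i' i}"
      by (rule card_mono) (use fin sub in auto)
    have ge0: "0 \<le> 1 - \<bar>x i - ?y si\<bar>" using yin[OF si] x i by auto
    have dist: "\<bar>x i - ?y si\<bar> \<le> \<bar>x i - ?y' si\<bar>" using yrel[OF si] by auto
    show ?thesis
      unfolding utility_def served_def using cle ge0 dist by auto
  qed
  then show "best_utility n m k prio x ?y s i \<ge> best_utility n m k prio x ?y' s i"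
    unfolding best_utility_def using assms(1) by (intro max_le) (auto simp: lessThan_empty_iff)
qed

end
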